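(* For any convex quadrilateral $\Delta\subset\mathbb R^2$ there is a unique pair $(\alpha,\beta)$ with $0\le\beta<1\le\alpha$ and $\alpha-\beta\ge1$ such that $\Delta$ is affinely equivalent to the convex hull of $(0,0),(1,0),(\alpha,1-\beta),(0,1)$. If $\Delta$ has no pair of parallel edges, then $\beta>0$ and $\alpha>1$, and $\Delta$ is affinely equivalent to the orthotoric quadrilateral $\sigma([1,\alpha]\times[0,\beta])$, where $\sigma(x,y)=(x+y,xy)$.
   Context: The pair $(\alpha,\beta)$ is called the characteristic pair of $\Delta$. *)

theory Defs
  imports "HOL-Analysis.Analysis"
begin

definition affinely_equivalent :: "(real \<times> real) set \<Rightarrow> (real \<times> real) set \<Rightarrow> bool" where
  "affinely_equivalent A B \<longleftrightarrow>
     (\<exists>L c. linear L \<and> bij L \<and> (\<lambda>x. L x + c) ` A = B)"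

definition convex_quadrilateral :: "(real \<times> real) set \<Rightarrow> bool" where
  "convex_quadrilateral D \<longleftrightarrow>
     (\<exists>P. card P = 4 \<and> D = convex hull P \<and> (\<forall>p\<in>P. p \<notin> convex hull (P - {p})))"

definition is_edge :: "(real \<times> real) set \<Rightarrow> (real \<times> real) \<Rightarrow> (real \<times> real) \<Rightarrow> bool" where
  "is_edge D p q \<longleftrightarrow> p \<noteq> q \<and> closed_segment p q face_of D \<and> p extreme_point_of D \<and> q extreme_point_of D"

definition has_parallel_edges :: "(real \<times> real) set \<Rightarrow> bool" where
  "has_parallel_edges D \<longleftrightarrow>
     (\<exists>p q p' q'. is_edge D p q \<and> is_edge D p' q' \<and> closed_segment p q \<noteq> closed_segment p' q'
        \<and> (\<exists>t::real. q - p = t *\<^sub>R (q' - p')))"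

definition sigma :: "real \<times> real \<Rightarrow> real \<times> real" where
  "sigma xy = (fst xy + snd xy, fst xy * snd xy)"

definition model_quadrilateral :: "real \<Rightarrow> real \<Rightarrow> (real \<times> real) set" where
  "model_quadrilateral \<alpha> \<beta> = convex hull {(0,0), (1,0), (\<alpha>, 1 - \<beta>), (0,1)}"

end

theory Submission
  imports Defs
begin

definition sa :: "real\<times>real \<Rightarrow> real\<times>real \<Rightarrow> real\<times>real \<Rightarrow> real" where
  "sa p q r = (fst q - fst p)*(snd r - snd p) - (snd q - snd p)*(fst r - fst p)"

lemma sa_pairs: "sa (a1,a2) (b1,b2) (c1,c2) = (b1 - a1)*(c2 - a2) - (b2 - a2)*(c1 - a1)"
  by (simp add: sa_def)

lemma in_hull3:
  assumes "(sa a b c > 0 \<and> sa d b c \<ge> 0 \<and> sa a d c \<ge> 0 \<and> sa a b d \<ge> 0) \<or>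
           (sa a b c < 0 \<and> sa d b c \<le> 0 \<and> sa a d c \<le> 0 \<and> sa a b d \<le> 0)"
  shows "d \<in> convex hull {a,b,c}"
proof -
  obtain a1 a2 b1 b2 c1 c2 d1 d2 where P: "a = (a1,a2)" "b = (b1,b2)" "c = (c1,c2)" "d = (d1,d2)"
    by (cases a, cases b, cases c, cases d) auto
  define S where "S = sa a b c"
  have S0: "S \<noteq> 0" using assms S_def by auto
  define u where "u = sa d b c / S"
  define v where "v = sa a d c / S"
  define w where "w = sa a b d / S"
  have uvw: "0 \<le> u \<and> 0 \<le> v \<and> 0 \<le> w"
    using assms unfolding u_def v_def w_def S_def
    by (auto simp: divide_nonneg_pos divide_nonpos_neg)
  have i1: "sa d b c + sa a d c + sa a b d = S"
    unfolding S_def P sa_pairs by algebra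
  have i2: "S * d1 = sa d b c * a1 + sa a d c * b1 + sa a b d * c1"
    unfolding S_def P sa_pairs by algebra
  have i3: "S * d2 = sa d b c * a2 + sa a d c * b2 + sa a b d * c2"
    unfolding S_def P sa_pairs by algebra
  have sum: "u + v + w = 1"
    using S0 i1 unfolding u_def v_def w_def by (simp add: field_simps)
  have e1: "d1 = u * a1 + v * b1 + w * c1"
    using S0 i2 unfolding u_def v_def w_def by (simp add: field_simps)
  have e2: "d2 = u * a2 + v * b2 + w * c2"
    using S0 i3 unfolding u_def v_def w_def by (simp add: field_simps)
  have eq: "d = u *\<^sub>R a + v *\<^sub>R b + w *\<^sub>R c"
    using e1 e2 P by simp
  show ?thesis unfolding convex_hull_3 using uvw sum eq by blast
qed

lemma collinear_seg:
  assumes "sa a b c = 0"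
  shows "a \<in> closed_segment b c \<or> b \<in> closed_segment a c \<or> c \<in> closed_segment a b"
proof -
  obtain a1 a2 b1 b2 c1 c2 where P: "a = (a1,a2)" "b = (b1,b2)" "c = (c1,c2)"
    by (cases a, cases b, cases c) auto
  have h: "(b1 - a1)*(c2 - a2) = (b2 - a2)*(c1 - a1)" using assms P sa_pairs by simp
  have "collinear {a,b,c}"
  proof (cases "a = b")
    case True then show ?thesis by simp
  next
    case False
    have "\<exists>t. c - b = t *\<^sub>R (a - b)"
    proof (cases "a1 = b1")
      case True
      then have "a2 \<noteq> b2" using False P by auto
      define t where "t = (c2-b2)/(a2-b2)"
      have "c1 - b1 = t * (a1 - b1)"
      proof -
        have "(a2 - b2) * (c1 - b1) = 0" using h True by (simp add: algebra_simps)
        then show ?thesis using True \<open>a2 \<noteq> b2\<close> by simp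
      qed
      moreover have "c2 - b2 = t * (a2 - b2)" using \<open>a2 \<noteq> b2\<close> unfolding t_def by simp
      ultimately show ?thesis using P by (intro exI[of _ t]) (simp add: prod_eq_iff)
    next
      case False
      define t where "t = (c1-b1)/(a1-b1)"
      have "c2 - b2 = t * (a2 - b2)"
      proof -
        have "(a1 - b1) * (c2 - b2) = (c1 - b1) * (a2 - b2)" using h by (simp add: algebra_simps)
        then show ?thesis using False unfolding t_def by (simp add: field_simps)
      qed
      moreover have "c1 - b1 = t * (a1 - b1)" using False unfolding t_def by simp
      ultimately show ?thesis using P by (intro exI[of _ t]) (simp add: prod_eq_iff)
    qed
    then have "collinear {0, a-b, c-b}" by (auto simp: collinear_lemma)
    then show ?thesis by (subst collinear_3) auto
  qed
  then show ?thesis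
    by (auto simp: collinear_between_cases between_mem_segment closed_segment_commute)
qed

lemma arith4:
  fixes U1 U2 U3 U4 :: real
  assumes "U1 \<noteq> 0" "U2 \<noteq> 0" "U3 \<noteq> 0" "U4 \<noteq> 0" "U1 + U3 = U2 + U4"
    and "\<not>((U2>0 \<and> U3\<ge>0 \<and> (-U4)\<ge>0 \<and> U1\<ge>0) \<or> (U2<0 \<and> U3\<le>0 \<and> (-U4)\<le>0 \<and> U1\<le>0))"
    and "\<not>((U3>0 \<and> U2\<ge>0 \<and> U4\<ge>0 \<and> (-U1)\<ge>0) \<or> (U3<0 \<and> U2\<le>0 \<and> U4\<le>0 \<and> (-U1)\<le>0))"
    and "\<not>((U4>0 \<and> (-U2)\<ge>0 \<and> U3\<ge>0 \<and> U1\<ge>0) \<or> (U4<0 \<and> (-U2)\<le>0 \<and> U3\<le>0 \<and> U1\<le>0))"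
    and "\<not>((U1>0 \<and> U2\<ge>0 \<and> (-U3)\<ge>0 \<and> U4\<ge>0) \<or> (U1<0 \<and> U2\<le>0 \<and> (-U3)\<le>0 \<and> U4\<le>0))"
  shows "((U4>0 \<and> 0<U1 \<and> U1\<le>U4 \<and> U3+U1 \<ge> 2*U4) \<or> (U4<0 \<and> U1<0 \<and> U1\<ge>U4 \<and> U3+U1 \<le> 2*U4)) \<or>
 ((U1>0 \<and> 0<U4 \<and> U4\<le>U1 \<and> (-U3)+U4 \<ge> 2*U1) \<or> (U1<0 \<and> U4<0 \<and> U4\<ge>U1 \<and> (-U3)+U4 \<le> 2*U1)) \<or>
 ((U3>0 \<and> 0<(-U1) \<and> (-U1)\<le>U3 \<and> U4+(-U1) \<ge> 2*U3) \<or> (U3<0 \<and> (-U1)<0 \<and> (-U1)\<ge>U3 \<and> U4+(-U1) \<le> 2*U3)) \<or>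
 (((-U1)>0 \<and> 0<U3 \<and> U3\<le>(-U1) \<and> (-U4)+U3 \<ge> 2*(-U1)) \<or> ((-U1)<0 \<and> U3<0 \<and> U3\<ge>(-U1) \<and> (-U4)+U3 \<le> 2*(-U1))) \<or>
 (((-U3)>0 \<and> 0<(-U4) \<and> (-U4)\<le>(-U3) \<and> U1+(-U4) \<ge> 2*(-U3)) \<or> ((-U3)<0 \<and> (-U4)<0 \<and> (-U4)\<ge>(-U3) \<and> U1+(-U4) \<le> 2*(-U3))) \<or>
 (((-U4)>0 \<and> 0<(-U3) \<and> (-U3)\<le>(-U4) \<and> (-U1)+(-U3) \<ge> 2*(-U4)) \<or> ((-U4)<0 \<and> (-U3)<0 \<and> (-U3)\<ge>(-U4) \<and> (-U1)+(-U3) \<le> 2*(-U4))) \<or>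
 (((-U4)>0 \<and> 0<(-U1) \<and> (-U1)\<le>(-U4) \<and> U2+(-U1) \<ge> 2*(-U4)) \<or> ((-U4)<0 \<and> (-U1)<0 \<and> (-U1)\<ge>(-U4) \<and> U2+(-U1) \<le> 2*(-U4))) \<or>
 (((-U1)>0 \<and> 0<(-U4) \<and> (-U4)\<le>(-U1) \<and> (-U2)+(-U4) \<ge> 2*(-U1)) \<or> ((-U1)<0 \<and> (-U4)<0 \<and> (-U4)\<ge>(-U1) \<and> (-U2)+(-U4) \<le> 2*(-U1))) \<or>
 ((U2>0 \<and> 0<U1 \<and> U1\<le>U2 \<and> (-U4)+U1 \<ge> 2*U2) \<or> (U2<0 \<and> U1<0 \<and> U1\<ge>U2 \<and> (-U4)+U1 \<le> 2*U2)) \<or>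
 ((U1>0 \<and> 0<U2 \<and> U2\<le>U1 \<and> U4+U2 \<ge> 2*U1) \<or> (U1<0 \<and> U2<0 \<and> U2\<ge>U1 \<and> U4+U2 \<le> 2*U1)) \<or>
 (((-U2)>0 \<and> 0<U4 \<and> U4\<le>(-U2) \<and> (-U1)+U4 \<ge> 2*(-U2)) \<or> ((-U2)<0 \<and> U4<0 \<and> U4\<ge>(-U2) \<and> (-U1)+U4 \<le> 2*(-U2))) \<or>
 ((U4>0 \<and> 0<(-U2) \<and> (-U2)\<le>U4 \<and> U1+(-U2) \<ge> 2*U4) \<or> (U4<0 \<and> (-U2)<0 \<and> (-U2)\<ge>U4 \<and> U1+(-U2) \<le> 2*U4)) \<or>
 (((-U3)>0 \<and> 0<U1 \<and> U1\<le>(-U3) \<and> (-U2)+U1 \<ge> 2*(-U3)) \<or> ((-U3)<0 \<and> U1<0 \<and> U1\<ge>(-U3) \<and> (-U2)+U1 \<le> 2*(-U3))) \<or>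
 ((U1>0 \<and> 0<(-U3) \<and> (-U3)\<le>U1 \<and> U2+(-U3) \<ge> 2*U1) \<or> (U1<0 \<and> (-U3)<0 \<and> (-U3)\<ge>U1 \<and> U2+(-U3) \<le> 2*U1)) \<or>
 (((-U2)>0 \<and> 0<(-U1) \<and> (-U1)\<le>(-U2) \<and> (-U3)+(-U1) \<ge> 2*(-U2)) \<or> ((-U2)<0 \<and> (-U1)<0 \<and> (-U1)\<ge>(-U2) \<and> (-U3)+(-U1) \<le> 2*(-U2))) \<or>
 (((-U1)>0 \<and> 0<(-U2) \<and> (-U2)\<le>(-U1) \<and> U3+(-U2) \<ge> 2*(-U1)) \<or> ((-U1)<0 \<and> (-U2)<0 \<and> (-U2)\<ge>(-U1) \<and> U3+(-U2) \<le> 2*(-U1))) \<or>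
 ((U2>0 \<and> 0<U3 \<and> U3\<le>U2 \<and> U1+U3 \<ge> 2*U2) \<or> (U2<0 \<and> U3<0 \<and> U3\<ge>U2 \<and> U1+U3 \<le> 2*U2)) \<or>
 ((U3>0 \<and> 0<U2 \<and> U2\<le>U3 \<and> (-U1)+U2 \<ge> 2*U3) \<or> (U3<0 \<and> U2<0 \<and> U2\<ge>U3 \<and> (-U1)+U2 \<le> 2*U3)) \<or>
 ((U3>0 \<and> 0<U4 \<and> U4\<le>U3 \<and> U2+U4 \<ge> 2*U3) \<or> (U3<0 \<and> U4<0 \<and> U4\<ge>U3 \<and> U2+U4 \<le> 2*U3)) \<or>
 ((U4>0 \<and> 0<U3 \<and> U3\<le>U4 \<and> (-U2)+U3 \<ge> 2*U4) \<or> (U4<0 \<and> U3<0 \<and> U3\<ge>U4 \<and> (-U2)+U3 \<le> 2*U4)) \<or>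
 ((U2>0 \<and> 0<(-U4) \<and> (-U4)\<le>U2 \<and> U3+(-U4) \<ge> 2*U2) \<or> (U2<0 \<and> (-U4)<0 \<and> (-U4)\<ge>U2 \<and> U3+(-U4) \<le> 2*U2)) \<or>
 (((-U4)>0 \<and> 0<U2 \<and> U2\<le>(-U4) \<and> (-U3)+U2 \<ge> 2*(-U4)) \<or> ((-U4)<0 \<and> U2<0 \<and> U2\<ge>(-U4) \<and> (-U3)+U2 \<le> 2*(-U4))) \<or>
 (((-U2)>0 \<and> 0<(-U3) \<and> (-U3)\<le>(-U2) \<and> U4+(-U3) \<ge> 2*(-U2)) \<or> ((-U2)<0 \<and> (-U3)<0 \<and> (-U3)\<ge>(-U2) \<and> U4+(-U3) \<le> 2*(-U2))) \<or>
 (((-U3)>0 \<and> 0<(-U2) \<and> (-U2)\<le>(-U3) \<and> (-U4)+(-U2) \<ge> 2*(-U3)) \<or> ((-U3)<0 \<and> (-U2)<0 \<and> (-U2)\<ge>(-U3) \<and> (-U4)+(-U2) \<le> 2*(-U3)))"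
  using assms by smt

definition good where
  "good A B C D \<longleftrightarrow> (let De = sa A B D; Y = sa A B C; X = sa A C D in
     (De>0 \<and> 0<Y \<and> Y\<le>De \<and> X+Y \<ge> 2*De) \<or> (De<0 \<and> Y<0 \<and> Y\<ge>De \<and> X+Y \<le> 2*De))"

lemma seg_sub: "closed_segment p q \<subseteq> convex hull (insert p (insert q S))"
  unfolding segment_convex_hull by (rule hull_mono) auto

lemma seg_sub2: "closed_segment p q \<subseteq> convex hull (insert r (insert p (insert q S)))"
  unfolding segment_convex_hull by (rule hull_mono) auto

lemma seg_sub3: "closed_segment p q \<subseteq> convex hull (insert p (insert r (insert q S)))"
  unfolding segment_convex_hull by (rule hull_mono) auto

lemma sa_nz:
  assumes "p \<notin> convex hull {q,r,s}" "q \<notin> convex hull {p,r,s}" "r \<notin> convex hull {p,q,s}"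
  shows "sa p q r \<noteq> 0"
proof
  assume "sa p q r = 0"
  from collinear_seg[OF this] show False
    using assms seg_sub[of q r "{s}"] seg_sub[of p r "{s}"] seg_sub[of p q "{s}"] by blast
qed

lemma exist_good:
  assumes "a \<notin> convex hull {b,c,d}" "b \<notin> convex hull {a,c,d}"
    "c \<notin> convex hull {a,b,d}" "d \<notin> convex hull {a,b,c}"
  shows "\<exists>A B C D. {A,B,C,D} = {a,b,c,d} \<and> good A B C D"
proof -
  define U1 where "U1 = sa a b c"
  define U2 where "U2 = sa b c d"
  define U3 where "U3 = sa c d a"
  define U4 where "U4 = sa d a b"
  have F: "sa a b c = U1"
    "sa a b d = U4"
    "sa a c b = - U1"
    "sa a c d = U3"
    "sa a d b = - U4"
    "sa a d c = - U3"
    "sa b a c = - U1"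
    "sa b a d = - U4"
    "sa b c a = U1"
    "sa b c d = U2"
    "sa b d a = U4"
    "sa b d c = - U2"
    "sa c a b = U1"
    "sa c a d = - U3"
    "sa c b a = - U1"
    "sa c b d = - U2"
    "sa c d a = U3"
    "sa c d b = U2"
    "sa d a b = U4"
    "sa d a c = U3"
    "sa d b a = - U4"
    "sa d b c = U2"
    "sa d c a = - U3"
    "sa d c b = - U2"
    unfolding U1_def U2_def U3_def U4_def sa_def by algebra+
  have id: "U1 + U3 = U2 + U4" unfolding U1_def U2_def U3_def U4_def sa_def by algebra
  have n1: "U1 \<noteq> 0" unfolding U1_def
    by (rule sa_nz[where s=d]) (use assms in \<open>auto simp: insert_commute\<close>)
  have n2: "U2 \<noteq> 0" unfolding U2_def
    by (rule sa_nz[where s=a]) (use assms in \<open>auto simp: insert_commute\<close>)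
  have n3: "U3 \<noteq> 0" unfolding U3_def
    by (rule sa_nz[where s=b]) (use assms in \<open>auto simp: insert_commute\<close>)
  have n4: "U4 \<noteq> 0" unfolding U4_def
    by (rule sa_nz[where s=c]) (use assms in \<open>auto simp: insert_commute\<close>)
  have c1: "\<not>((U2>0 \<and> U3\<ge>0 \<and> (-U4)\<ge>0 \<and> U1\<ge>0) \<or> (U2<0 \<and> U3\<le>0 \<and> (-U4)\<le>0 \<and> U1\<le>0))"
    using in_hull3[of b c d a] assms(1) unfolding F by blast
  have c2: "\<not>((U3>0 \<and> U2\<ge>0 \<and> U4\<ge>0 \<and> (-U1)\<ge>0) \<or> (U3<0 \<and> U2\<le>0 \<and> U4\<le>0 \<and> (-U1)\<le>0))"
    using in_hull3[of a c d b] assms(2) unfolding F by blast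
  have c3: "\<not>((U4>0 \<and> (-U2)\<ge>0 \<and> U3\<ge>0 \<and> U1\<ge>0) \<or> (U4<0 \<and> (-U2)\<le>0 \<and> U3\<le>0 \<and> U1\<le>0))"
    using in_hull3[of a b d c] assms(3) unfolding F by blast
  have c4: "\<not>((U1>0 \<and> U2\<ge>0 \<and> (-U3)\<ge>0 \<and> U4\<ge>0) \<or> (U1<0 \<and> U2\<le>0 \<and> (-U3)\<le>0 \<and> U4\<le>0))"
    using in_hull3[of a b c d] assms(4) unfolding F by blast
  have disj: "good a b c d \<or> good a b d c \<or> good a c b d \<or> good a c d b \<or> good a d b c \<or> good a d c b \<or> good b a c d \<or> good b a d c \<or> good b c a d \<or> good b c d a \<or> good b d a c \<or> good b d c a \<or> good c a b d \<or> good c a d b \<or> good c b a d \<or> good c b d a \<or> good c d a b \<or> good c d b a \<or> good d a b c \<or> good d a c b \<or> good d b a c \<or> good d b c a \<or> good d c a b \<or> good d c b a"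
    unfolding good_def Let_def F using arith4[OF n1 n2 n3 n4 id c1 c2 c3 c4] by blast
  show ?thesis using disj
    by (elim disjE) (rule exI, rule exI, rule exI, rule exI, rule conjI[rotated], assumption, blast)+
qed

lemma aff_hull_image:
  assumes "linear L"
  shows "(\<lambda>x. L x + c) ` (convex hull S) = convex hull ((\<lambda>x. L x + c) ` S)"
proof -
  have e: "\<And>T. (\<lambda>x. L x + c) ` T = (+) c ` (L ` T)" by (auto simp: image_iff add.commute)
  show ?thesis unfolding e convex_hull_translation convex_hull_linear_image[OF assms] ..
qed

lemma div_comb: "(x::real)*p + y*r = z*w \<Longrightarrow> w \<noteq> 0 \<Longrightarrow> x/w*p + y/w*r = z"
  by (simp add: field_simps)

lemma good_model:
  assumes "good A B C D"
  shows "\<exists>\<alpha> \<beta>. 0 \<le> \<beta> \<and> \<beta> < 1 \<and> 1 \<le> \<alpha> \<and> \<alpha> - \<beta> \<ge> 1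
              \<and> affinely_equivalent (convex hull {A,B,C,D}) (model_quadrilateral \<alpha> \<beta>)"
proof -
  obtain a1 a2 b1 b2 c1 c2 d1 d2 where P: "A = (a1,a2)" "B = (b1,b2)" "C = (c1,c2)" "D = (d1,d2)"
    by (cases A, cases B, cases C, cases D) auto
  define De where "De = sa A B D"
  define X where "X = sa A C D"
  define Y where "Y = sa A B C"
  have g: "(De>0 \<and> 0<Y \<and> Y\<le>De \<and> X+Y \<ge> 2*De) \<or> (De<0 \<and> Y<0 \<and> Y\<ge>De \<and> X+Y \<le> 2*De)"
    using assms unfolding good_def Let_def De_def X_def Y_def by auto
  have De0: "De \<noteq> 0" using g by auto
  define \<alpha> where "\<alpha> = X / De"
  define \<beta> where "\<beta> = 1 - Y / De"
  have r1: "0 < Y / De \<and> Y / De \<le> 1 \<and> X / De + Y / De \<ge> 2"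
  proof (cases "De > 0")
    case True
    then show ?thesis using g by (auto simp: field_simps)
  next
    case False
    then have "De < 0" using De0 by auto
    then show ?thesis using g by (auto simp: field_simps)
  qed
  have cons: "0 \<le> \<beta> \<and> \<beta> < 1 \<and> 1 \<le> \<alpha> \<and> \<alpha> - \<beta> \<ge> 1"
    using r1 unfolding \<alpha>_def \<beta>_def by auto
  define L where "L = (\<lambda>p::real\<times>real. ((fst p * (d2 - a2) - snd p * (d1 - a1)) / De,
                                      ((b1 - a1) * snd p - (b2 - a2) * fst p) / De))"
  define Li where "Li = (\<lambda>q::real\<times>real. (fst q * (b1 - a1) + snd q * (d1 - a1),
                                         fst q * (b2 - a2) + snd q * (d2 - a2)))"
  have De_eq: "De = (b1 - a1) * (d2 - a2) - (b2 - a2) * (d1 - a1)"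
    unfolding De_def P sa_pairs by simp
  have lin: "linear L"
    unfolding L_def using De0 by (intro linearI) (auto simp: prod_eq_iff field_simps)
  have inv1: "L \<circ> Li = id"
  proof
    fix q :: "real \<times> real"
    show "(L \<circ> Li) q = id q"
      unfolding L_def Li_def using De0 by (simp add: prod_eq_iff field_simps De_eq)
  qed
  have inv2: "Li \<circ> L = id"
  proof
    fix q :: "real \<times> real"
    obtain q1 q2 where q: "q = (q1,q2)" by (cases q)
    have e1: "(q1 * (d2 - a2) - q2 * (d1 - a1)) * (b1 - a1) + ((b1 - a1) * q2 - (b2 - a2) * q1) * (d1 - a1) = q1 * De"
      unfolding De_eq by algebra
    have e2: "(q1 * (d2 - a2) - q2 * (d1 - a1)) * (b2 - a2) + ((b1 - a1) * q2 - (b2 - a2) * q1) * (d2 - a2) = q2 * De"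
      unfolding De_eq by algebra
    have "(q1 * (d2 - a2) - q2 * (d1 - a1)) / De * (b1 - a1) + ((b1 - a1) * q2 - (b2 - a2) * q1) / De * (d1 - a1) = q1"
      by (rule div_comb[OF e1 De0])
    moreover have "(q1 * (d2 - a2) - q2 * (d1 - a1)) / De * (b2 - a2) + ((b1 - a1) * q2 - (b2 - a2) * q1) / De * (d2 - a2) = q2"
      by (rule div_comb[OF e2 De0])
    ultimately show "(Li \<circ> L) q = id q"
      unfolding L_def Li_def q by simp
  qed
  have bij: "bij L" by (rule o_bij[OF inv2 inv1])
  define c where "c = - L A"
  have Lp: "L p + c = (sa A p D / De, sa A B p / De)" for p
    unfolding c_def L_def P sa_def using De0 by (simp add: prod_eq_iff field_simps)
  have imgs: "(\<lambda>x. L x + c) ` {A,B,C,D} = {(0,0), (1,0), (\<alpha>, 1 - \<beta>), (0,1)}"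
    unfolding Lp using De0 by (simp add: \<alpha>_def \<beta>_def X_def Y_def De_def sa_def)
  have "(\<lambda>x. L x + c) ` (convex hull {A,B,C,D}) = model_quadrilateral \<alpha> \<beta>"
    unfolding aff_hull_image[OF lin] imgs model_quadrilateral_def ..
  then show ?thesis using cons lin bij unfolding affinely_equivalent_def by blast
qed

lemma arith_sets:
  fixes n1 n2 n3 n4 m1 m2 m3 m4 :: real
  assumes "0 < n1" "n1 \<le> n2" "n2 \<le> n3" "n3 \<le> n4" "n1 + n4 = n2 + n3"
    "0 < m1" "m1 \<le> m2" "m2 \<le> m3" "m3 \<le> m4" "m1 + m4 = m2 + m3"
    "{0,n1,n2,n3,n4} = {0,m1,m2,m3,m4}"
  shows "n1 = m1 \<and> n2 = m2 \<and> n4 = m4"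
proof -
  have A: "x \<in> {0,n1,n2,n3,n4} \<longleftrightarrow> x \<in> {0,m1,m2,m3,m4}" for x using assms(11) by simp
  have a1: "n1 = m1 \<or> n1 = m2 \<or> n1 = m3 \<or> n1 = m4" using A[of n1] assms(1) by auto
  have a2: "n2 = m1 \<or> n2 = m2 \<or> n2 = m3 \<or> n2 = m4" using A[of n2] assms(1,2) by auto
  have a4: "n4 = m1 \<or> n4 = m2 \<or> n4 = m3 \<or> n4 = m4" using A[of n4] assms(1-4) by auto
  have b1: "m1 = n1 \<or> m1 = n2 \<or> m1 = n3 \<or> m1 = n4" using A[of m1] assms(6) by auto
  have b2: "m2 = n1 \<or> m2 = n2 \<or> m2 = n3 \<or> m2 = n4" using A[of m2] assms(6,7) by auto
  have b4: "m4 = n1 \<or> m4 = n2 \<or> m4 = n3 \<or> m4 = n4" using A[of m4] assms(6-9) by auto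
  have e1: "n1 = m1" using a1 b1 assms(1-10) by (elim disjE; linarith)
  have e4: "n4 = m4" using a4 b4 assms(1-10) by (elim disjE; linarith)
  have e2: "n2 = m2" using a2 b2 e1 e4 assms(1-10) by (elim disjE; linarith)
  show ?thesis using e1 e2 e4 by simp
qed

definition T :: "(real\<times>real) set \<Rightarrow> real set" where
  "T S = {\<bar>sa p q r\<bar> | p q r. p \<in> S \<and> q \<in> S \<and> r \<in> S}"

lemma linear_pair:
  assumes "linear L"
  shows "L x = fst x *\<^sub>R L (1,0) + snd x *\<^sub>R L (0,1)"
proof -
  have "x = fst x *\<^sub>R (1,0) + snd x *\<^sub>R (0,1)" by (simp add: prod_eq_iff)
  then have "L x = L (fst x *\<^sub>R (1,0) + snd x *\<^sub>R (0,1))" by (rule arg_cong)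
  also have "\<dots> = fst x *\<^sub>R L (1,0) + snd x *\<^sub>R L (0,1)"
    by (simp only: linear_add[OF assms] linear_cmul[OF assms])
  finally show ?thesis .
qed

lemma sa_affine:
  assumes "linear L"
  shows "sa (L p + c) (L q + c) (L r + c) =
    (fst (L (1,0)) * snd (L (0,1)) - snd (L (1,0)) * fst (L (0,1))) * sa p q r"
  apply (subst (1 2 3) linear_pair[OF assms])
  apply (simp add: sa_def)
  apply (simp add: algebra_simps)
  done

lemma T_image:
  assumes "linear L"
  shows "T ((\<lambda>x. L x + c) ` S) =
    (\<lambda>t. \<bar>fst (L (1,0)) * snd (L (0,1)) - snd (L (1,0)) * fst (L (0,1))\<bar> * t) ` T S"
    (is "_ = (\<lambda>t. ?k * t) ` _")
proof
  show "T ((\<lambda>x. L x + c) ` S) \<subseteq> (\<lambda>t. ?k * t) ` T S"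
  proof
    fix t assume "t \<in> T ((\<lambda>x. L x + c) ` S)"
    then obtain p q r where "p \<in> S" "q \<in> S" "r \<in> S" "t = \<bar>sa (L p + c) (L q + c) (L r + c)\<bar>"
      unfolding T_def by blast
    then show "t \<in> (\<lambda>t. ?k * t) ` T S"
      unfolding T_def sa_affine[OF assms] abs_mult by blast
  qed
next
  show "(\<lambda>t. ?k * t) ` T S \<subseteq> T ((\<lambda>x. L x + c) ` S)"
  proof
    fix t assume "t \<in> (\<lambda>t. ?k * t) ` T S"
    then obtain p q r where "p \<in> S" "q \<in> S" "r \<in> S" "t = ?k * \<bar>sa p q r\<bar>"
      unfolding T_def by blast
    then have "t = \<bar>sa (L p + c) (L q + c) (L r + c)\<bar>" "L p + c \<in> (\<lambda>x. L x + c) ` S"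
      "L q + c \<in> (\<lambda>x. L x + c) ` S" "L r + c \<in> (\<lambda>x. L x + c) ` S"
      unfolding sa_affine[OF assms] abs_mult by auto
    then show "t \<in> T ((\<lambda>x. L x + c) ` S)" unfolding T_def by blast
  qed
qed

lemma sa_degen: "sa p p q = 0" "sa p q p = 0" "sa q p p = 0"
  by (simp_all add: sa_def)

lemma T4:
  "T {a,b,c,d} = {0, \<bar>sa a b c\<bar>, \<bar>sa b c d\<bar>, \<bar>sa c d a\<bar>, \<bar>sa d a b\<bar>}"
proof -
  define U1 where "U1 = sa a b c"
  define U2 where "U2 = sa b c d"
  define U3 where "U3 = sa c d a"
  define U4 where "U4 = sa d a b"
  have F: "sa a b c = U1"
    "sa a b d = U4"
    "sa a c b = - U1"
    "sa a c d = U3"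
    "sa a d b = - U4"
    "sa a d c = - U3"
    "sa b a c = - U1"
    "sa b a d = - U4"
    "sa b c a = U1"
    "sa b c d = U2"
    "sa b d a = U4"
    "sa b d c = - U2"
    "sa c a b = U1"
    "sa c a d = - U3"
    "sa c b a = - U1"
    "sa c b d = - U2"
    "sa c d a = U3"
    "sa c d b = U2"
    "sa d a b = U4"
    "sa d a c = U3"
    "sa d b a = - U4"
    "sa d b c = U2"
    "sa d c a = - U3"
    "sa d c b = - U2"
    unfolding U1_def U2_def U3_def U4_def sa_def by algebra+
  have "T {a,b,c,d} = {0, \<bar>U1\<bar>, \<bar>U2\<bar>, \<bar>U3\<bar>, \<bar>U4\<bar>}"
  proof
    have m: "\<bar>sa p q r\<bar> \<in> {0, \<bar>U1\<bar>, \<bar>U2\<bar>, \<bar>U3\<bar>, \<bar>U4\<bar>}"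
      if "p \<in> {a,b,c,d}" "q \<in> {a,b,c,d}" "r \<in> {a,b,c,d}" for p q r
      using that apply (elim insertE emptyE)
      apply (simp_all only: F sa_degen abs_minus_cancel abs_zero insert_iff simp_thms)
      done
    show "T {a,b,c,d} \<subseteq> {0, \<bar>U1\<bar>, \<bar>U2\<bar>, \<bar>U3\<bar>, \<bar>U4\<bar>}"
      unfolding T_def using m by blast
    have "0 = \<bar>sa a a a\<bar>" "\<bar>U1\<bar> = \<bar>sa a b c\<bar>" "\<bar>U2\<bar> = \<bar>sa b c d\<bar>" "\<bar>U3\<bar> = \<bar>sa c d a\<bar>"
      "\<bar>U4\<bar> = \<bar>sa d a b\<bar>" by (simp_all add: U1_def U2_def U3_def U4_def sa_degen)
    then show "{0, \<bar>U1\<bar>, \<bar>U2\<bar>, \<bar>U3\<bar>, \<bar>U4\<bar>} \<subseteq> T {a,b,c,d}"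
      unfolding T_def by (simp only: insert_subset) blast
  qed
  then show ?thesis unfolding U1_def U2_def U3_def U4_def .
qed

lemma T_model:
  assumes "0 \<le> \<beta>" "\<beta> < 1" "1 \<le> \<alpha>" "\<alpha> - \<beta> \<ge> 1"
  shows "T {(0,0), (1,0), (\<alpha>, 1 - \<beta>), (0,1)} = {0, 1 - \<beta>, \<alpha> - \<beta>, \<alpha>, 1}"
  unfolding T4 using assms by (simp add: sa_def algebra_simps)

lemma CP_ext:
  fixes S :: "(real\<times>real) set"
  assumes "finite S" "\<forall>p\<in>S. p \<notin> convex hull (S - {p})"
  shows "{x. x extreme_point_of convex hull S} = S"
  using extreme_point_of_convex_hull_convex_independent[OF finite_imp_compact[OF assms(1)]] assms(2)
  by auto

lemma CP_model:
  assumes "0 \<le> \<beta>" "\<beta> < 1" "1 \<le> \<alpha>" "\<alpha> - \<beta> \<ge> 1"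
  shows "\<forall>p\<in>{(0,0), (1,0), (\<alpha>, 1 - \<beta>), (0::real,1::real)}.
           p \<notin> convex hull ({(0,0), (1,0), (\<alpha>, 1 - \<beta>), (0,1)} - {p})"
proof -
  have d: "(\<alpha>, 1 - \<beta>) \<noteq> (0,0)" "(\<alpha>, 1 - \<beta>) \<noteq> (1,0)" "(\<alpha>, 1 - \<beta>) \<noteq> (0,1)"
    using assms by auto
  have s1: "{(0,0), (1,0), (\<alpha>, 1 - \<beta>), (0::real,1::real)} - {(0,0)} = {(1,0), (\<alpha>, 1 - \<beta>), (0,1)}"
    using d by auto
  have s2: "{(0,0), (1,0), (\<alpha>, 1 - \<beta>), (0::real,1::real)} - {(1,0)} = {(0,0), (\<alpha>, 1 - \<beta>), (0,1)}"
    using d by auto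
  have s3: "{(0,0), (1,0), (\<alpha>, 1 - \<beta>), (0::real,1::real)} - {(\<alpha>, 1 - \<beta>)} = {(0,0), (1,0), (0,1)}"
    using d by auto
  have s4: "{(0,0), (1,0), (\<alpha>, 1 - \<beta>), (0::real,1::real)} - {(0,1)} = {(0,0), (1,0), (\<alpha>, 1 - \<beta>)}"
    using d by auto
  have h1: "(0,0) \<notin> convex hull {(1,0), (\<alpha>, 1 - \<beta>), (0::real,1::real)}"
  proof
    assume "(0,0) \<in> convex hull {(1,0), (\<alpha>, 1 - \<beta>), (0::real,1::real)}"
    then obtain u v w where H: "0 \<le> u" "0 \<le> v" "0 \<le> w" "u+v+w = 1"
      "u + v * \<alpha> = 0" "v * (1 - \<beta>) + w = 0"
      unfolding convex_hull_3 by auto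
    have "v * (1 - \<beta>) \<ge> 0" using H assms by auto
    then have "w = 0" "v * (1 - \<beta>) = 0" using H by linarith+
    then have "v = 0" using assms by simp
    then show False using \<open>w = 0\<close> H by simp
  qed
  have h2: "(1,0) \<notin> convex hull {(0,0), (\<alpha>, 1 - \<beta>), (0::real,1::real)}"
  proof
    assume "(1,0) \<in> convex hull {(0,0), (\<alpha>, 1 - \<beta>), (0::real,1::real)}"
    then obtain u v w where H: "0 \<le> u" "0 \<le> v" "0 \<le> w" "u+v+w = 1"
      "v * \<alpha> = 1" "v * (1 - \<beta>) + w = 0"
      unfolding convex_hull_3 by auto
    have "v * (1 - \<beta>) \<ge> 0" using H assms by auto
    then have "v * (1 - \<beta>) = 0" using H by linarith
    then have "v = 0" using assms by simp
    then show False using H by simp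
  qed
  have h3: "(\<alpha>, 1 - \<beta>) \<notin> convex hull {(0,0), (1,0), (0::real,1::real)}"
  proof
    assume "(\<alpha>, 1 - \<beta>) \<in> convex hull {(0,0), (1,0), (0::real,1::real)}"
    then obtain u v w where "0 \<le> u" "0 \<le> v" "0 \<le> w" "u+v+w = 1"
      "v = \<alpha>" "w = 1 - \<beta>"
      unfolding convex_hull_3 by auto
    then show False using assms by linarith
  qed
  have h4: "(0,1) \<notin> convex hull {(0,0), (1,0), (\<alpha>, 1 - \<beta>)}"
  proof
    assume "(0,1) \<in> convex hull {(0,0), (1,0), (\<alpha>, 1 - \<beta>)}"
    then obtain u v w where H: "0 \<le> u" "0 \<le> v" "0 \<le> w" "u+v+w = 1"
      "v + w * \<alpha> = 0" "w * (1 - \<beta>) = 1"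
      unfolding convex_hull_3 by auto
    have "w * \<alpha> \<ge> 0" using H assms by auto
    then have "w * \<alpha> = 0" using H by linarith
    then have "w = 0" using assms by simp
    then show False using H by simp
  qed
  show ?thesis using h1 h2 h3 h4 s1 s2 s3 s4 by auto
qed

lemma inj_aff: "inj L \<Longrightarrow> inj (\<lambda>x. L x + (c::real\<times>real))"
  by (auto simp: inj_def)

lemma CP_image:
  fixes P :: "(real\<times>real) set" and L :: "real\<times>real \<Rightarrow> real\<times>real"
  assumes "linear L" "inj L" "\<forall>p\<in>P. p \<notin> convex hull (P - {p})"
  shows "\<forall>q\<in>(\<lambda>x. L x + c) ` P. q \<notin> convex hull ((\<lambda>x. L x + c) ` P - {q})"
proof
  fix q assume "q \<in> (\<lambda>x. L x + c) ` P"
  then obtain p where p: "p \<in> P" "q = L p + c" by auto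
  have inj: "inj (\<lambda>x. L x + c)" using inj_aff[OF assms(2)] .
  have "(\<lambda>x. L x + c) ` P - {q} = (\<lambda>x. L x + c) ` (P - {p})"
    using p image_set_diff[OF inj, of P "{p}"] by simp
  then have "convex hull ((\<lambda>x. L x + c) ` P - {q}) = (\<lambda>x. L x + c) ` (convex hull (P - {p}))"
    using aff_hull_image[OF assms(1)] by simp
  then show "q \<notin> convex hull ((\<lambda>x. L x + c) ` P - {q})"
  proof (intro notI)
    assume "convex hull ((\<lambda>x. L x + c) ` P - {q}) = (\<lambda>x. L x + c) ` (convex hull (P - {p}))"
      "q \<in> convex hull ((\<lambda>x. L x + c) ` P - {q})"
    then obtain x where x: "x \<in> convex hull (P - {p})" "L x + c = L p + c" using p by auto
    then have "x = p" using assms(2) by (simp add: inj_eq)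
    then show False using x assms(3) p by auto
  qed
qed

lemma model_T:
  fixes P :: "(real\<times>real) set"
  assumes fin: "finite P" and cp: "\<forall>p\<in>P. p \<notin> convex hull (P - {p})"
    and cons: "0 \<le> \<beta>" "\<beta> < 1" "1 \<le> \<alpha>" "\<alpha> - \<beta> \<ge> 1"
    and ae: "affinely_equivalent (convex hull P) (model_quadrilateral \<alpha> \<beta>)"
  shows "\<exists>k>0. {0, 1 - \<beta>, \<alpha> - \<beta>, \<alpha>, 1} = (\<lambda>t. k * t) ` T P"
proof -
  obtain L c where L: "linear L" "bij L" "(\<lambda>x. L x + c) ` (convex hull P) = model_quadrilateral \<alpha> \<beta>"
    using ae unfolding affinely_equivalent_def by blast
  define V where "V = {(0,0), (1,0), (\<alpha>, 1 - \<beta>), (0::real,1::real)}"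
  have h1: "convex hull ((\<lambda>x. L x + c) ` P) = convex hull V"
    using L(3) unfolding aff_hull_image[OF L(1)] model_quadrilateral_def V_def .
  have h2: "{x. x extreme_point_of convex hull ((\<lambda>x. L x + c) ` P)} = (\<lambda>x. L x + c) ` P"
    by (rule CP_ext[OF finite_imageI[OF fin] CP_image[OF L(1) bij_is_inj[OF L(2)] cp]])
  have h3: "{x. x extreme_point_of convex hull V} = V"
    unfolding V_def by (rule CP_ext[OF _ CP_model[OF cons]]) simp
  have img: "(\<lambda>x. L x + c) ` P = V"
    using h2 h3 unfolding h1 by simp
  define k where "k = \<bar>fst (L (1,0)) * snd (L (0,1)) - snd (L (1,0)) * fst (L (0,1))\<bar>"
  have TV: "T V = (\<lambda>t. k * t) ` T P"
    unfolding img[symmetric] k_def by (rule T_image[OF L(1)])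
  have TV2: "T V = {0, 1 - \<beta>, \<alpha> - \<beta>, \<alpha>, 1}"
    unfolding V_def by (rule T_model[OF cons])
  have "k \<noteq> 0"
  proof
    assume "k = 0"
    then have "T V \<subseteq> {0}" using TV by auto
    moreover have "(1::real) \<in> T V" using TV2 by simp
    ultimately show False by auto
  qed
  then have "k > 0" unfolding k_def by simp
  then show ?thesis using TV TV2 by (intro exI[of _ k]) simp
qed

lemma uniqueness:
  fixes P :: "(real\<times>real) set"
  assumes fin: "finite P" and cp: "\<forall>p\<in>P. p \<notin> convex hull (P - {p})"
    and c1: "0 \<le> \<beta>1" "\<beta>1 < 1" "1 \<le> \<alpha>1" "\<alpha>1 - \<beta>1 \<ge> 1"
    and ae1: "affinely_equivalent (convex hull P) (model_quadrilateral \<alpha>1 \<beta>1)"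
    and c2: "0 \<le> \<beta>2" "\<beta>2 < 1" "1 \<le> \<alpha>2" "\<alpha>2 - \<beta>2 \<ge> 1"
    and ae2: "affinely_equivalent (convex hull P) (model_quadrilateral \<alpha>2 \<beta>2)"
  shows "\<alpha>1 = \<alpha>2 \<and> \<beta>1 = \<beta>2"
proof -
  obtain k1 where k1: "k1 > 0" "{0, 1 - \<beta>1, \<alpha>1 - \<beta>1, \<alpha>1, 1} = (\<lambda>t. k1 * t) ` T P"
    using model_T[OF fin cp c1 ae1] by blast
  obtain k2 where k2: "k2 > 0" "{0, 1 - \<beta>2, \<alpha>2 - \<beta>2, \<alpha>2, 1} = (\<lambda>t. k2 * t) ` T P"
    using model_T[OF fin cp c2 ae2] by blast
  define r where "r = k2 / k1"
  have r0: "r > 0" using k1 k2 unfolding r_def by simp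
  have "(\<lambda>t. k2 * t) ` T P = (\<lambda>t. r * t) ` ((\<lambda>t. k1 * t) ` T P)"
    unfolding image_image r_def using k1 by simp
  then have "{0, 1 - \<beta>2, \<alpha>2 - \<beta>2, \<alpha>2, 1} = (\<lambda>t. r * t) ` {0, 1 - \<beta>1, \<alpha>1 - \<beta>1, \<alpha>1, 1}"
    using k1 k2 by simp
  moreover have "(\<lambda>t. r * t) ` {0, 1 - \<beta>1, \<alpha>1 - \<beta>1, \<alpha>1, 1} = {0, r * (1 - \<beta>1), r * (\<alpha>1 - \<beta>1), r * \<alpha>1, r}"
    by simp
  ultimately have seq0: "{0, 1 - \<beta>2, \<alpha>2 - \<beta>2, \<alpha>2, 1} = {0, r * (1 - \<beta>1), r * (\<alpha>1 - \<beta>1), r * \<alpha>1, r}"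
    by simp
  have e1: "{0, r * (1 - \<beta>1), r, r * (\<alpha>1 - \<beta>1), r * \<alpha>1} = {0, r * (1 - \<beta>1), r * (\<alpha>1 - \<beta>1), r * \<alpha>1, r}"
    by blast
  have e2: "{0, 1 - \<beta>2, 1, \<alpha>2 - \<beta>2, \<alpha>2} = {0, 1 - \<beta>2, \<alpha>2 - \<beta>2, \<alpha>2, (1::real)}"
    by blast
  have seq: "{0, r * (1 - \<beta>1), r, r * (\<alpha>1 - \<beta>1), r * \<alpha>1} = {0, 1 - \<beta>2, 1, \<alpha>2 - \<beta>2, \<alpha>2}"
    unfolding e1 e2 seq0 ..
  have o1: "0 < r * (1 - \<beta>1)" using r0 c1 by simp
  have o2: "r * (1 - \<beta>1) \<le> r" using r0 c1 by (simp add: mult_left_le)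
  have o3: "r \<le> r * (\<alpha>1 - \<beta>1)" using r0 c1 by (simp add: mult_le_cancel_left1)
  have o4: "r * (\<alpha>1 - \<beta>1) \<le> r * \<alpha>1" using r0 c1 by (simp add: mult_left_mono)
  have o5: "r * (1 - \<beta>1) + r * \<alpha>1 = r + r * (\<alpha>1 - \<beta>1)" by (simp add: algebra_simps)
  have "r * (1 - \<beta>1) = 1 - \<beta>2 \<and> r = 1 \<and> r * \<alpha>1 = \<alpha>2"
    by (rule arith_sets[OF o1 o2 o3 o4 o5 _ _ _ _ _ seq]) (use c2 in auto)
  then show ?thesis by auto
qed

lemma sigma_sub:
  fixes \<alpha> \<beta> :: real
  assumes "0 < \<beta>" "\<beta> < 1" "1 < \<alpha>"
  shows "sigma ` ({1..\<alpha>} \<times> {0..\<beta>}) \<subseteq> convex hull {(1,0), (1+\<beta>,\<beta>), (\<alpha>+\<beta>,\<alpha>*\<beta>), (\<alpha>,0)}"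
proof
  fix z assume "z \<in> sigma ` ({1..\<alpha>} \<times> {0..\<beta>})"
  then obtain x y where xy: "1 \<le> x" "x \<le> \<alpha>" "0 \<le> y" "y \<le> \<beta>" "z = (x + y, x * y)"
    by (auto simp: sigma_def)
  define Q where "Q = convex hull {(1,0), (1+\<beta>,\<beta>), (\<alpha>+\<beta>,\<alpha>*\<beta>), (\<alpha>,0::real)}"
  have cQ: "convex Q" unfolding Q_def by simp
  have cQ': "\<forall>x\<in>Q. \<forall>y\<in>Q. \<forall>u. 0 \<le> u \<and> u \<le> 1 \<longrightarrow> (1 - u) *\<^sub>R x + u *\<^sub>R y \<in> Q"
    using cQ by (simp add: convex_alt)
  have v: "(1,0) \<in> Q" "(1+\<beta>,\<beta>) \<in> Q" "(\<alpha>+\<beta>,\<alpha>*\<beta>) \<in> Q" "(\<alpha>,0) \<in> Q"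
    unfolding Q_def by (simp_all add: hull_inc)
  define s where "s = (x - 1) / (\<alpha> - 1)"
  define t where "t = y / \<beta>"
  have s01: "0 \<le> s" "s \<le> 1" using xy assms unfolding s_def by (auto simp: field_simps)
  have t01: "0 \<le> t" "t \<le> 1" using xy assms unfolding t_def by (auto simp: field_simps)
  have xs: "x = 1 + s * (\<alpha> - 1)" using assms unfolding s_def by (simp add: field_simps)
  have yt: "y = t * \<beta>" using assms unfolding t_def by (simp add: field_simps)
  define p1 where "p1 = (1 - t) *\<^sub>R (1,0) + t *\<^sub>R (1+\<beta>,\<beta>)"
  define p2 where "p2 = (1 - t) *\<^sub>R (\<alpha>,0) + t *\<^sub>R (\<alpha>+\<beta>,\<alpha>*\<beta>)"
  have p1: "p1 \<in> Q" unfolding p1_def using cQ' v t01 by blast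
  have p2: "p2 \<in> Q" unfolding p2_def using cQ' v t01 by blast
  have "(1 - s) *\<^sub>R p1 + s *\<^sub>R p2 \<in> Q" using cQ' p1 p2 s01 by blast
  moreover have "(1 - s) *\<^sub>R p1 + s *\<^sub>R p2 = z"
    unfolding p1_def p2_def xy(5) xs yt by (simp add: prod_eq_iff algebra_simps)
  ultimately show "z \<in> Q" by simp
qed

lemma sigma_sup:
  fixes \<alpha> \<beta> :: real
  assumes "0 < \<beta>" "\<beta> < 1" "1 < \<alpha>"
  shows "convex hull {(1,0), (1+\<beta>,\<beta>), (\<alpha>+\<beta>,\<alpha>*\<beta>), (\<alpha>,0)} \<subseteq> sigma ` ({1..\<alpha>} \<times> {0..\<beta>})"
proof -
  define H where "H = {x::real\<times>real. (0,-1) \<bullet> x \<le> 0} \<inter> {x. (-1,1) \<bullet> x \<le> -1}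
     \<inter> {x. (\<alpha>,-1) \<bullet> x \<le> \<alpha>*\<alpha>} \<inter> {x. (-\<beta>,1) \<bullet> x \<le> -\<beta>*\<beta>}"
  have cH: "convex H" unfolding H_def by (intro convex_Int convex_halfspace_le)
  have f1: "1 + \<alpha> * \<beta> \<le> \<alpha> + \<beta>"
  proof -
    have "(\<alpha>-1)*(1-\<beta>) \<ge> 0" using assms by simp
    then show ?thesis by (simp add: algebra_simps)
  qed
  have f2: "\<alpha> + \<alpha> * \<beta> \<le> \<beta> + \<alpha> * \<alpha>"
  proof -
    have "(\<alpha>-1)*(\<alpha>-\<beta>) \<ge> 0" using assms by simp
    then show ?thesis by (simp add: algebra_simps)
  qed
  have "convex hull {(1,0), (1+\<beta>,\<beta>), (\<alpha>+\<beta>,\<alpha>*\<beta>), (\<alpha>,0)} \<subseteq> H"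
    apply (rule hull_minimal)
     prefer 2 apply (rule cH)
    using assms f1 f2 by (auto simp: H_def inner_prod_def algebra_simps mult_le_cancel_left1 mult_left_mono)
  moreover have "H \<subseteq> sigma ` ({1..\<alpha>} \<times> {0..\<beta>})"
  proof
    fix z assume "z \<in> H"
    obtain X Y where z: "z = (X, Y)" by (cases z)
    have h: "0 \<le> Y" "Y \<le> X - 1" "\<alpha> * (X - \<alpha>) \<le> Y" "Y \<le> \<beta> * (X - \<beta>)"
      using \<open>z \<in> H\<close> unfolding H_def z by (auto simp: inner_prod_def algebra_simps)
    have disc: "X*X - 4*Y \<ge> 0"
    proof -
      have "X*X - 4*Y = (X-2)*(X-2) + 4*(X - 1 - Y)" by (simp add: algebra_simps)
      moreover have "(X-2)*(X-2) + 4*(X - 1 - Y) \<ge> 0"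
        using h(2) by (intro add_nonneg_nonneg) auto
      ultimately show ?thesis by metis
    qed
    define s where "s = sqrt (X*X - 4*Y)"
    have s0: "s \<ge> 0" unfolding s_def using disc by simp
    have ss: "s * s = X*X - 4*Y" unfolding s_def using disc by simp
    define r1 where "r1 = (X - s)/2"
    define r2 where "r2 = (X + s)/2"
    have r12: "r1 \<le> r2" unfolding r1_def r2_def using s0 by simp
    have sum: "r1 + r2 = X" unfolding r1_def r2_def by (simp add: field_simps)
    have prod: "r1 * r2 = Y" unfolding r1_def r2_def using ss by (simp add: field_simps)
    have q: "(z0 - r1) * (z0 - r2) = z0*z0 - X*z0 + Y" for z0
      using sum prod by (simp add: algebra_simps) (metis distrib_left mult.commute)
    have q1: "(1 - r1) * (1 - r2) \<le> 0" using q[of 1] h by simp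
    have qb: "(\<beta> - r1) * (\<beta> - r2) \<le> 0" using q[of \<beta>] h by (simp add: algebra_simps)
    have qa: "(\<alpha> - r1) * (\<alpha> - r2) \<ge> 0" using q[of \<alpha>] h by (simp add: algebra_simps)
    have r2_1: "r2 \<ge> 1"
    proof (rule ccontr)
      assume "\<not> r2 \<ge> 1"
      then have "1 - r2 > 0" "1 - r1 > 0" using r12 by auto
      then have "(1 - r1) * (1 - r2) > 0" by simp
      then show False using q1 by simp
    qed
    have r1_b: "r1 \<le> \<beta>"
    proof (rule ccontr)
      assume "\<not> r1 \<le> \<beta>"
      then have "\<beta> - r1 < 0" "\<beta> - r2 < 0" using r12 by auto
      then have "(\<beta> - r1) * (\<beta> - r2) > 0" by (simp add: mult_neg_neg)
      then show False using qb by simp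
    qed
    have r1_0: "r1 \<ge> 0"
    proof (rule ccontr)
      assume "\<not> r1 \<ge> 0"
      then have "r1 * r2 < 0" using r2_1 by (simp add: mult_neg_pos)
      then show False using prod h by simp
    qed
    have r2_a: "r2 \<le> \<alpha>"
    proof (rule ccontr)
      assume "\<not> r2 \<le> \<alpha>"
      then have "\<alpha> - r2 < 0" "\<alpha> - r1 > 0" using r1_b assms by auto
      then have "(\<alpha> - r1) * (\<alpha> - r2) < 0" by (simp add: mult_pos_neg)
      then show False using qa by simp
    qed
    have "sigma (r2, r1) = z" unfolding sigma_def z using sum prod by (simp add: add.commute mult.commute)
    moreover have "(r2, r1) \<in> {1..\<alpha>} \<times> {0..\<beta>}" using r2_1 r2_a r1_0 r1_b by simp
    ultimately show "z \<in> sigma ` ({1..\<alpha>} \<times> {0..\<beta>})" by force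
  qed
  ultimately show ?thesis by blast
qed

lemma img_aff:
  fixes L :: "real\<times>real \<Rightarrow> real\<times>real"
  shows "(\<lambda>x. L x + c) ` X = (+) c ` (L ` X)"
  unfolding image_image by (rule image_cong) (simp_all add: add.commute)

lemma face_aff:
  fixes L :: "real\<times>real \<Rightarrow> real\<times>real"
  assumes "linear L" "inj L"
  shows "((\<lambda>x. L x + c) ` A face_of (\<lambda>x. L x + c) ` S) \<longleftrightarrow> A face_of S"
  unfolding img_aff face_of_translation_eq face_of_linear_image[OF assms] ..

lemma seg_aff:
  fixes L :: "real\<times>real \<Rightarrow> real\<times>real"
  assumes "linear L"
  shows "closed_segment (L p + c) (L q + c) = (\<lambda>x. L x + c) ` closed_segment p q"
proof -
  have "closed_segment (L p + c) (L q + c) = closed_segment (c + L p) (c + L q)"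
    by (simp add: add.commute)
  also have "\<dots> = (+) c ` closed_segment (L p) (L q)" by (rule closed_segment_translation)
  also have "\<dots> = (+) c ` (L ` closed_segment p q)" by (simp add: closed_segment_linear_image[OF assms])
  finally show ?thesis unfolding img_aff .
qed

lemma edge_transfer:
  fixes L :: "real\<times>real \<Rightarrow> real\<times>real"
  assumes "linear L" "inj L" "is_edge ((\<lambda>x. L x + c) ` S) (L p + c) (L q + c)"
  shows "is_edge S p q"
proof -
  have e: "L p + c \<noteq> L q + c" "closed_segment (L p + c) (L q + c) face_of (\<lambda>x. L x + c) ` S"
    "L p + c extreme_point_of (\<lambda>x. L x + c) ` S" "L q + c extreme_point_of (\<lambda>x. L x + c) ` S"
    using assms(3) unfolding is_edge_def by auto
  have "p \<noteq> q" using e(1) by auto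
  moreover have "closed_segment p q face_of S"
    using e(2) unfolding seg_aff[OF assms(1)] face_aff[OF assms(1,2)] .
  moreover have "p extreme_point_of S"
  proof -
    have "(\<lambda>x. L x + c) ` {p} face_of (\<lambda>x. L x + c) ` S" using e(3) by (simp add: face_of_singleton)
    then show ?thesis unfolding face_aff[OF assms(1,2)] face_of_singleton .
  qed
  moreover have "q extreme_point_of S"
  proof -
    have "(\<lambda>x. L x + c) ` {q} face_of (\<lambda>x. L x + c) ` S" using e(4) by (simp add: face_of_singleton)
    then show ?thesis unfolding face_aff[OF assms(1,2)] face_of_singleton .
  qed
  ultimately show ?thesis unfolding is_edge_def by blast
qed

lemma model_edges:
  assumes "1 \<le> \<alpha>"
  shows "is_edge (model_quadrilateral \<alpha> 0) (0,0) (1,0)" "is_edge (model_quadrilateral \<alpha> 0) (\<alpha>,1) (0,1)"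
proof -
  define V where "V = {(0,0), (1,0), (\<alpha>, 1), (0::real, 1::real)}"
  have M: "model_quadrilateral \<alpha> 0 = convex hull V" unfolding model_quadrilateral_def V_def by simp
  have ext: "{x. x extreme_point_of convex hull V} = V"
    using CP_ext[of V] CP_model[of 0 \<alpha>] assms unfolding V_def by simp
  have y0: "affine hull {(0,0), (1,0::real)} \<subseteq> {x. snd x = (0::real)}"
    by (rule hull_minimal) (auto simp: affine_def)
  have y1: "affine hull {(\<alpha>,1), (0::real, 1::real)} \<subseteq> {x. snd x = (1::real)}"
    by (rule hull_minimal) (auto simp: affine_def)
  have c0: "convex hull {(0,0), (1,0::real)} \<subseteq> {x. snd x = (0::real)}"
    by (rule hull_minimal) (auto simp: convex_def)
  have c1: "convex hull {(\<alpha>,1), (0::real, 1::real)} \<subseteq> {x. snd x = (1::real)}"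
    by (rule hull_minimal) (auto simp: convex_def)
  have d1: "V - {(0,0), (1,0)} = {(\<alpha>,1), (0, 1)}" unfolding V_def using assms by (simp add: insert_Diff_if)
  have d2: "V - {(\<alpha>,1), (0, 1)} = {(0,0), (1,0)}" unfolding V_def using assms by (simp add: insert_Diff_if)
  have f1: "convex hull {(0,0), (1,0::real)} face_of convex hull V"
    apply (rule face_of_convex_hulls)
      apply (simp add: V_def)
     apply (simp add: V_def)
    unfolding d1
  proof (rule equals0I)
    fix x assume "x \<in> affine hull {(0,0), (1,0::real)} \<inter> convex hull {(\<alpha>,1), (0::real, 1::real)}"
    then have "snd x = 0" "snd x = 1" using y0 c1 by auto
    then show False by simp
  qed
  have f2: "convex hull {(\<alpha>,1), (0::real, 1::real)} face_of convex hull V"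
    apply (rule face_of_convex_hulls)
      apply (simp add: V_def)
     apply (simp add: V_def)
    unfolding d2
  proof (rule equals0I)
    fix x assume "x \<in> affine hull {(\<alpha>,1), (0::real, 1::real)} \<inter> convex hull {(0,0), (1,0::real)}"
    then have "snd x = 0" "snd x = 1" using y1 c0 by auto
    then show False by simp
  qed
  have ep: "x extreme_point_of convex hull V" if "x \<in> V" for x
    using ext that by (metis mem_Collect_eq)
  have inV: "(0,0) \<in> V" "(1,0) \<in> V" "(\<alpha>,1) \<in> V" "(0,1) \<in> V" unfolding V_def by simp_all
  show "is_edge (model_quadrilateral \<alpha> 0) (0,0) (1,0)"
    unfolding is_edge_def M segment_convex_hull using f1 ep[OF inV(1)] ep[OF inV(2)] by simp
  show "is_edge (model_quadrilateral \<alpha> 0) (\<alpha>,1) (0,1)"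
    unfolding is_edge_def M segment_convex_hull using f2 ep[OF inV(3)] ep[OF inV(4)] assms by simp
qed

lemma beta_pos:
  assumes cons: "0 \<le> \<beta>" "\<beta> < 1" "1 \<le> \<alpha>" "\<alpha> - \<beta> \<ge> 1"
    and ae: "affinely_equivalent D (model_quadrilateral \<alpha> \<beta>)"
    and np: "\<not> has_parallel_edges D"
  shows "\<beta> > 0"
proof (rule ccontr)
  assume "\<not> \<beta> > 0"
  then have b0: "\<beta> = 0" using cons by simp
  obtain L c where L: "linear L" "bij L" "(\<lambda>x. L x + c) ` D = model_quadrilateral \<alpha> 0"
    using ae b0 unfolding affinely_equivalent_def by blast
  have inj: "inj L" using L(2) bij_is_inj by blast
  have mem: "(0,0) \<in> model_quadrilateral \<alpha> 0" "(1,0) \<in> model_quadrilateral \<alpha> 0"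
    "(\<alpha>,1) \<in> model_quadrilateral \<alpha> 0" "(0,1) \<in> model_quadrilateral \<alpha> 0"
    unfolding model_quadrilateral_def by (simp_all add: hull_inc)
  have "(0,0) \<in> (\<lambda>x. L x + c) ` D" using mem(1) L(3) by simp
  then obtain p0 where p0: "p0 \<in> D" "L p0 + c = (0,0)" by (auto simp del: prod.inject)
  have "(1,0) \<in> (\<lambda>x. L x + c) ` D" using mem(2) L(3) by simp
  then obtain p1 where p1: "p1 \<in> D" "L p1 + c = (1,0)" by (auto simp del: prod.inject)
  have "(\<alpha>,1) \<in> (\<lambda>x. L x + c) ` D" using mem(3) L(3) by simp
  then obtain q0 where q0: "q0 \<in> D" "L q0 + c = (\<alpha>,1)" by (auto simp del: prod.inject)
  have "(0,1) \<in> (\<lambda>x. L x + c) ` D" using mem(4) L(3) by simp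
  then obtain q1 where q1: "q1 \<in> D" "L q1 + c = (0,1)" by (auto simp del: prod.inject)
  have e1: "is_edge D p0 p1"
    by (rule edge_transfer[OF L(1) inj, where c=c]) (use model_edges(1)[OF cons(3)] L(3) p0 p1 in simp)
  have e2: "is_edge D q0 q1"
    by (rule edge_transfer[OF L(1) inj, where c=c]) (use model_edges(2)[OF cons(3)] L(3) q0 q1 in simp)
  define t where "t = - 1 / \<alpha>"
  have "L (p1 - p0) = L (t *\<^sub>R (q1 - q0))"
  proof -
    have "L (p1 - p0) = (L p1 + c) - (L p0 + c)" using linear_diff[OF L(1)] by simp
    also have "\<dots> = (1,0)" using p0 p1 by simp
    also have "\<dots> = t *\<^sub>R ((L q1 + c) - (L q0 + c))"
      using q0 q1 cons unfolding t_def by simp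
    also have "\<dots> = L (t *\<^sub>R (q1 - q0))"
      using linear_diff[OF L(1)] linear_cmul[OF L(1)] by simp
    finally show ?thesis .
  qed
  then have par: "p1 - p0 = t *\<^sub>R (q1 - q0)" using inj by (simp add: inj_eq)
  have ne: "closed_segment p0 p1 \<noteq> closed_segment q0 q1"
  proof
    assume eq: "closed_segment p0 p1 = closed_segment q0 q1"
    have "p0 \<in> closed_segment q0 q1" using eq by (metis ends_in_segment(1))
    then have "L p0 + c \<in> closed_segment (L q0 + c) (L q1 + c)"
      unfolding seg_aff[OF L(1)] by blast
    then have "(0,0) \<in> closed_segment (\<alpha>,1) (0::real,1::real)" using p0 q0 q1 by simp
    moreover have "closed_segment (\<alpha>,1) (0::real,1::real) \<subseteq> {x. snd x = 1}"
      unfolding segment_convex_hull by (rule hull_minimal) (auto simp: convex_def)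
    ultimately show False by auto
  qed
  have "has_parallel_edges D"
    unfolding has_parallel_edges_def using e1 e2 ne par by blast
  then show False using np by simp
qed

lemma sigma_eq:
  fixes \<alpha> \<beta> :: real
  assumes "0 < \<beta>" "\<beta> < 1" "1 < \<alpha>"
  shows "sigma ` ({1..\<alpha>} \<times> {0..\<beta>}) = convex hull {(1,0), (1+\<beta>,\<beta>), (\<alpha>+\<beta>,\<alpha>*\<beta>), (\<alpha>,0)}"
  using sigma_sub[OF assms] sigma_sup[OF assms] by blast

lemma part2:
  assumes cons: "0 \<le> \<beta>" "\<beta> < 1" "1 \<le> \<alpha>" "\<alpha> - \<beta> \<ge> 1"
    and ae: "affinely_equivalent D (model_quadrilateral \<alpha> \<beta>)"
    and np: "\<not> has_parallel_edges D"
  shows "\<beta> > 0 \<and> \<alpha> > 1 \<and> affinely_equivalent D (sigma ` ({1..\<alpha>} \<times> {0..\<beta>}))"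
proof -
  have b: "\<beta> > 0" by (rule beta_pos[OF cons ae np])
  have a: "\<alpha> > 1" using b cons by linarith
  obtain L c where L: "linear L" "bij L" "(\<lambda>x. L x + c) ` D = model_quadrilateral \<alpha> \<beta>"
    using ae unfolding affinely_equivalent_def by blast
  define LF where "LF = (\<lambda>p::real\<times>real. (\<beta> * fst p + (\<alpha> - 1) * snd p, \<beta> * fst p))"
  define LI where "LI = (\<lambda>p::real\<times>real. (snd p / \<beta>, (fst p - snd p) / (\<alpha> - 1)))"
  define cF where "cF = ((1::real), (0::real))"
  have linF: "linear LF" unfolding LF_def
    by (intro linearI) (auto simp: prod_eq_iff algebra_simps)
  have a1: "\<alpha> - 1 \<noteq> 0" using a by simp
  have b1: "\<beta> \<noteq> 0" using b by simp
  have i1: "LF \<circ> LI = id"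
  proof
    fix p :: "real\<times>real"
    obtain x y where p: "p = (x,y)" by (cases p)
    have "\<beta> * (y / \<beta>) + (\<alpha> - 1) * ((x - y) / (\<alpha> - 1)) = x" using a1 b1 by simp
    moreover have "\<beta> * (y / \<beta>) = y" using b1 by simp
    ultimately show "(LF \<circ> LI) p = id p" unfolding LF_def LI_def p by simp
  qed
  have i2: "LI \<circ> LF = id"
  proof
    fix p :: "real\<times>real"
    obtain x y where p: "p = (x,y)" by (cases p)
    have "\<beta> * x / \<beta> = x" using b1 by simp
    moreover have "(\<beta> * x + (\<alpha> - 1) * y - \<beta> * x) / (\<alpha> - 1) = y" using a1 by simp
    ultimately show "(LI \<circ> LF) p = id p" unfolding LF_def LI_def p by simp
  qed
  have bijF: "bij LF" by (rule o_bij[OF i2 i1])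
  have v1: "LF (0,0) + cF = (1,0)" unfolding LF_def cF_def by simp
  have v2: "LF (1,0) + cF = (1+\<beta>,\<beta>)" unfolding LF_def cF_def by simp
  have v3: "LF (\<alpha>, 1 - \<beta>) + cF = (\<alpha>+\<beta>,\<alpha>*\<beta>)" unfolding LF_def cF_def
    by (simp add: algebra_simps)
  have v4: "LF (0,1) + cF = (\<alpha>,0)" unfolding LF_def cF_def by simp
  have imgF: "(\<lambda>x. LF x + cF) ` {(0,0), (1,0), (\<alpha>, 1 - \<beta>), (0,1)} =
      {(1,0), (1+\<beta>,\<beta>), (\<alpha>+\<beta>,\<alpha>*\<beta>), (\<alpha>,0)}"
    by (simp only: image_insert image_empty v1 v2 v3 v4)
  have F: "(\<lambda>x. LF x + cF) ` model_quadrilateral \<alpha> \<beta> = sigma ` ({1..\<alpha>} \<times> {0..\<beta>})"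
    unfolding model_quadrilateral_def aff_hull_image[OF linF] imgF sigma_eq[OF b cons(2) a] ..
  have comp: "(\<lambda>x. (LF \<circ> L) x + (LF c + cF)) ` D = (\<lambda>x. LF x + cF) ` ((\<lambda>x. L x + c) ` D)"
    unfolding image_image by (rule image_cong) (simp_all add: linear_add[OF linF] add.assoc)
  have "affinely_equivalent D (sigma ` ({1..\<alpha>} \<times> {0..\<beta>}))"
    unfolding affinely_equivalent_def
    apply (rule exI[of _ "LF \<circ> L"], rule exI[of _ "LF c + cF"])
    using linear_compose[OF L(1) linF] bij_comp[OF L(2) bijF] comp L(3) F by simp
  then show ?thesis using a b by simp
qed

lemma card4:
  fixes P :: "'a set"
  assumes "card P = 4"
  shows "\<exists>a b c d. P = {a,b,c,d} \<and> a \<noteq> b \<and> a \<noteq> c \<and> a \<noteq> d \<and> b \<noteq> c \<and> b \<noteq> d \<and> c \<noteq> d"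
  using assms by (auto simp: card_Suc_eq numeral_eq_Suc)

lemma quad_exists:
  assumes "convex_quadrilateral D"
  obtains P where "finite P" "\<forall>p\<in>P. p \<notin> convex hull (P - {p})" "D = convex hull P"
    "\<exists>\<alpha> \<beta>. 0 \<le> \<beta> \<and> \<beta> < 1 \<and> 1 \<le> \<alpha> \<and> \<alpha> - \<beta> \<ge> 1
              \<and> affinely_equivalent D (model_quadrilateral \<alpha> \<beta>)"
proof -
  obtain P where P: "card P = 4" "D = convex hull P" "\<forall>p\<in>P. p \<notin> convex hull (P - {p})"
    using assms unfolding convex_quadrilateral_def by blast
  obtain a b c d where abcd: "P = {a,b,c,d}" "a \<noteq> b" "a \<noteq> c" "a \<noteq> d" "b \<noteq> c" "b \<noteq> d" "c \<noteq> d"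
    using card4[OF P(1)] by blast
  have fin: "finite P" using P(1) by (simp add: card_ge_0_finite)
  have "P - {a} = {b,c,d}" "P - {b} = {a,c,d}" "P - {c} = {a,b,d}" "P - {d} = {a,b,c}"
    using abcd by auto
  then have cp: "a \<notin> convex hull {b,c,d}" "b \<notin> convex hull {a,c,d}"
    "c \<notin> convex hull {a,b,d}" "d \<notin> convex hull {a,b,c}"
    using P(3) abcd(1) by (metis insertI1 insertCI)+
  obtain A B C E where ABCE: "{A,B,C,E} = {a,b,c,d}" "good A B C E"
    using exist_good[OF cp] by blast
  have "\<exists>\<alpha> \<beta>. 0 \<le> \<beta> \<and> \<beta> < 1 \<and> 1 \<le> \<alpha> \<and> \<alpha> - \<beta> \<ge> 1
              \<and> affinely_equivalent D (model_quadrilateral \<alpha> \<beta>)"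
    using good_model[OF ABCE(2)] unfolding ABCE(1) abcd(1)[symmetric] P(2)[symmetric] .
  then show ?thesis using that fin P by blast
qed

theorem mainTheorem6:
  assumes "convex_quadrilateral D"
  shows "(\<exists>!(\<alpha>, \<beta>). 0 \<le> \<beta> \<and> \<beta> < 1 \<and> 1 \<le> \<alpha> \<and> \<alpha> - \<beta> \<ge> 1
              \<and> affinely_equivalent D (model_quadrilateral \<alpha> \<beta>))
    \<and> (\<forall>\<alpha> \<beta>. 0 \<le> \<beta> \<and> \<beta> < 1 \<and> 1 \<le> \<alpha> \<and> \<alpha> - \<beta> \<ge> 1
              \<and> affinely_equivalent D (model_quadrilateral \<alpha> \<beta>)
              \<and> \<not> has_parallel_edges D
              \<longrightarrow> \<beta> > 0 \<and> \<alpha> > 1 \<and> affinely_equivalent D (sigma ` ({1..\<alpha>} \<times> {0..\<beta>})))"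
proof
  obtain P where P: "finite P" "\<forall>p\<in>P. p \<notin> convex hull (P - {p})" "D = convex hull P"
    and ex: "\<exists>\<alpha> \<beta>. 0 \<le> \<beta> \<and> \<beta> < 1 \<and> 1 \<le> \<alpha> \<and> \<alpha> - \<beta> \<ge> 1
              \<and> affinely_equivalent D (model_quadrilateral \<alpha> \<beta>)"
    using quad_exists[OF assms] by blast
  obtain \<alpha>0 \<beta>0 where ab0: "0 \<le> \<beta>0 \<and> \<beta>0 < 1 \<and> 1 \<le> \<alpha>0 \<and> \<alpha>0 - \<beta>0 \<ge> 1
              \<and> affinely_equivalent D (model_quadrilateral \<alpha>0 \<beta>0)"
    using ex by blast
  show "\<exists>!(\<alpha>, \<beta>). 0 \<le> \<beta> \<and> \<beta> < 1 \<and> 1 \<le> \<alpha> \<and> \<alpha> - \<beta> \<ge> 1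
              \<and> affinely_equivalent D (model_quadrilateral \<alpha> \<beta>)"
  proof (rule ex1I[of _ "(\<alpha>0, \<beta>0)"])
    show "case (\<alpha>0, \<beta>0) of (\<alpha>, \<beta>) \<Rightarrow> 0 \<le> \<beta> \<and> \<beta> < 1 \<and> 1 \<le> \<alpha> \<and> \<alpha> - \<beta> \<ge> 1
              \<and> affinely_equivalent D (model_quadrilateral \<alpha> \<beta>)" using ab0 by simp
  next
    fix x assume x: "case x of (\<alpha>, \<beta>) \<Rightarrow> 0 \<le> \<beta> \<and> \<beta> < 1 \<and> 1 \<le> \<alpha> \<and> \<alpha> - \<beta> \<ge> 1
              \<and> affinely_equivalent D (model_quadrilateral \<alpha> \<beta>)"
    obtain a1 b1 where xe: "x = (a1, b1)" by (cases x)
    have h1: "0 \<le> b1 \<and> b1 < 1 \<and> 1 \<le> a1 \<and> a1 - b1 \<ge> 1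
              \<and> affinely_equivalent (convex hull P) (model_quadrilateral a1 b1)"
      using x xe P(3) by simp
    have h0: "0 \<le> \<beta>0 \<and> \<beta>0 < 1 \<and> 1 \<le> \<alpha>0 \<and> \<alpha>0 - \<beta>0 \<ge> 1
              \<and> affinely_equivalent (convex hull P) (model_quadrilateral \<alpha>0 \<beta>0)"
      using ab0 P(3) by simp
    have "a1 = \<alpha>0 \<and> b1 = \<beta>0"
      using uniqueness[OF P(1) P(2), of b1 a1 \<beta>0 \<alpha>0] h1 h0 by blast
    then show "x = (\<alpha>0, \<beta>0)" using xe by simp
  qed
next
  show "\<forall>\<alpha> \<beta>. 0 \<le> \<beta> \<and> \<beta> < 1 \<and> 1 \<le> \<alpha> \<and> \<alpha> - \<beta> \<ge> 1
              \<and> affinely_equivalent D (model_quadrilateral \<alpha> \<beta>)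
              \<and> \<not> has_parallel_edges D
              \<longrightarrow> \<beta> > 0 \<and> \<alpha> > 1 \<and> affinely_equivalent D (sigma ` ({1..\<alpha>} \<times> {0..\<beta>}))"
    using part2 by blast
qed

end
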